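(* For $n\in\mathbb{N}_{\geq1}$ let $\widetilde c(n)$ be the number of rooted binary trees with $n$ leaves and minimal Colless index, and $\widetilde s(n)$ the number of rooted binary trees with $n$ leaves and minimal Sackin index. Then $\widetilde c(n)\leq\widetilde s(n)$.
   Context: A rooted binary tree with $n\geq 2$ leaves is a rooted tree whose root has degree 2 and all other internal nodes have degree 3; for $n=1$ it is a single node; trees are counted up to isomorphism. For a node $u$ let $n_u$ be the number of leaves in the subtree rooted at $u$. The Colless index is $\mathcal{C}(T)=\sum_v|n_{v_1}-n_{v_2}|$ over internal nodes $v$ with children $v_1,v_2$; the Sackin index is $\mathcal{S}(T)=\sum_u n_u$ over internal nodes $u$. Minimality is among all rooted binary trees with $n$ leaves. *)

theory Defs
  imports Main
begin

text \<open>Rooted binary trees (unlabelled, ordered representation); a leaf, or a root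
with two children.  Isomorphism (as rooted unordered trees) is generated by
swapping children at internal nodes.\<close>

datatype btree = Leaf | Node btree btree

fun leaves :: "btree \<Rightarrow> nat" where
  "leaves Leaf = 1"
| "leaves (Node l r) = leaves l + leaves r"

inductive iso :: "btree \<Rightarrow> btree \<Rightarrow> bool" where
  iso_leaf: "iso Leaf Leaf"
| iso_node: "iso l l' \<Longrightarrow> iso r r' \<Longrightarrow> iso (Node l r) (Node l' r')"
| iso_swap: "iso l r' \<Longrightarrow> iso r l' \<Longrightarrow> iso (Node l r) (Node l' r')"

definition isorel :: "(btree \<times> btree) set" where
  "isorel = {(s, t). iso s t}"

fun colless :: "btree \<Rightarrow> nat" where
  "colless Leaf = 0"
| "colless (Node l r) = colless l + colless r + nat \<bar>int (leaves l) - int (leaves r)\<bar>"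

fun sackin :: "btree \<Rightarrow> nat" where
  "sackin Leaf = 0"
| "sackin (Node l r) = sackin l + sackin r + leaves l + leaves r"

definition trees_with :: "nat \<Rightarrow> btree set" where
  "trees_with n = {t. leaves t = n}"

definition min_colless_trees :: "nat \<Rightarrow> btree set" where
  "min_colless_trees n = {t \<in> trees_with n. \<forall>t' \<in> trees_with n. colless t \<le> colless t'}"

definition min_sackin_trees :: "nat \<Rightarrow> btree set" where
  "min_sackin_trees n = {t \<in> trees_with n. \<forall>t' \<in> trees_with n. sackin t \<le> sackin t'}"

definition c_tilde :: "nat \<Rightarrow> nat" where
  "c_tilde n = card (min_colless_trees n // isorel)"

definition s_tilde :: "nat \<Rightarrow> nat" where
  "s_tilde n = card (min_sackin_trees n // isorel)"

end

theory Submission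
  imports Defs
begin

fun cf :: "nat \<Rightarrow> nat" where
  "cf 0 = 0"
| "cf (Suc 0) = 0"
| "cf (Suc (Suc m)) = cf ((m + 3) div 2) + cf ((m + 2) div 2) + (m mod 2)"

lemma cf_unf: "n \<ge> 2 \<Longrightarrow> cf n = cf ((n+1) div 2) + cf (n div 2) + n mod 2"
proof -
  assume "n \<ge> 2"
  then obtain m where "n = Suc (Suc m)" by (metis add_2_eq_Suc le_Suc_ex)
  moreover have "(m+3) div 2 = (n+1) div 2" "(m+2) div 2 = n div 2" "m mod 2 = n mod 2"
    using calculation by (auto simp: mod_Suc_eq)
  ultimately show ?thesis by simp
qed

lemma suc_mod2 [simp]: "Suc (k*2) mod 2 = (1::nat)" by presburger

definition good :: "nat \<Rightarrow> nat \<Rightarrow> bool" where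
  "good a b = (\<exists>j. 2^j \<le> a \<and> a \<le> 2^(j+1) \<and> 2^j \<le> b \<and> b \<le> 2^(j+1))"

lemma pow_exists: "(a::nat) \<ge> 1 \<Longrightarrow> \<exists>j. 2^j \<le> a \<and> a < 2^(j+1)"
proof (induction a rule: less_induct)
  case (less a)
  show ?case
  proof (cases "a = 1")
    case True then show ?thesis by (intro exI[of _ 0]) auto
  next
    case False
    then have "a div 2 \<ge> 1" "a div 2 < a" using less.prems by auto
    then obtain j where "2^j \<le> a div 2" "a div 2 < 2^(j+1)" using less.IH by blast
    then show ?thesis by (intro exI[of _ "j+1"]) auto
  qed
qed

lemma good_refl: "a \<ge> 1 \<Longrightarrow> good a a"
  unfolding good_def using pow_exists[of a] by fastforce

lemma good_double: "good x y \<Longrightarrow> good (2*x) (2*y)"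
  unfolding good_def
  by (metis (no_types, lifting) Suc_eq_plus1 mult_le_mono2 power_Suc)

lemma good_odd_even:
  assumes "good ((a+1) div 2) (b div 2)" "odd a" "even b" "b \<le> a"
  shows "good a b"
proof -
  obtain j where j: "2^j \<le> (a+1) div 2" "(a+1) div 2 \<le> 2^(j+1)" "2^j \<le> b div 2" "b div 2 \<le> 2^(j+1)"
    using assms(1) unfolding good_def by blast
  have "2^(j+1) \<le> b" using j(3) assms(3) by auto
  moreover have "a \<le> 2^(j+2)" using j(2) assms(2) by auto
  moreover have "b \<le> 2^(j+2)" using calculation assms(4) by auto
  ultimately show ?thesis unfolding good_def using assms(4)
    by (intro exI[of _ "j+1"]) auto
qed

lemma good_even_odd:
  assumes "good (a div 2) (b div 2)" "even a" "odd b" "b \<le> a"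
  shows "good a b"
proof -
  obtain j where j: "2^j \<le> a div 2" "a div 2 \<le> 2^(j+1)" "2^j \<le> b div 2" "b div 2 \<le> 2^(j+1)"
    using assms(1) unfolding good_def by blast
  have "2^(j+1) \<le> b" using j(3) assms(3) by auto
  moreover have "a \<le> 2^(j+2)" using j(2) assms(2) by auto
  moreover have "b \<le> 2^(j+2)" using calculation assms(4) by auto
  ultimately show ?thesis unfolding good_def using assms(4)
    by (intro exI[of _ "j+1"]) auto
qed

lemma key:
  "b \<le> a \<Longrightarrow> 1 \<le> b \<Longrightarrow>
    cf (a+b) \<le> cf a + cf b + (a - b) \<and> (\<not> good a b \<longrightarrow> cf (a+b) < cf a + cf b + (a - b))"
proof (induction "a+b" arbitrary: a b rule: less_induct)
  case less
  note IH = less.hyps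
  show ?case
  proof (cases "a = b")
    case True
    have "cf (a+b) = cf a + cf b" using True less.prems cf_unf[of "a+a"] by simp
    then show ?thesis using True good_refl less.prems by auto
  next
    case False
    hence ab: "b < a" using less.prems by auto
    show ?thesis
    proof (cases "b = 1")
      case b1: True
      show ?thesis
      proof (cases "odd a")
        case True
        define a2 where "a2 = (a - 1) div 2"
        have a2: "a2 \<ge> 1" "(a+1) div 2 = a2 + 1" "a div 2 = a2" "a = 2*a2+1"
          using True ab b1 unfolding a2_def by (auto elim!: oddE)
        have fa: "cf a = cf (a2+1) + cf a2 + 1" using cf_unf[of a] a2 by simp
        have fn: "cf (a+b) = cf (a2+1) + cf (a2+1)" using cf_unf[of "a+b"] a2 b1
          by (simp add: algebra_simps)
        have "cf (a2+1) \<le> cf a2 + cf 1 + (a2 - 1)" using IH[of a2 1] a2 b1 by auto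
        then show ?thesis using fa fn b1 a2 by auto
      next
        case False
        then obtain h where h: "a = 2*h" by auto
        show ?thesis
        proof (cases "h = 1")
          case True
          have c2: "cf 2 = 0" using cf_unf[of 2] by simp
          have "cf 3 = 1" using cf_unf[of 3] c2 by simp
          moreover note c2
          moreover have "good 2 1" unfolding good_def by (intro exI[of _ 0]) auto
          ultimately show ?thesis using h b1 True by simp
        next
          case False
          hence h2: "h \<ge> 2" using h ab b1 by auto
          have fa: "cf a = cf h + cf h" using cf_unf[of a] h h2 by simp
          have fn: "cf (a+b) = cf (h+1) + cf h + 1" using cf_unf[of "a+b"] h b1 h2
            by (simp add: algebra_simps)
          have "cf (h+1) \<le> cf h + cf 1 + (h - 1)" using IH[of h 1] h h2 b1 by auto
          then have "cf (a+b) < cf a + cf b + (a - b)" using fa fn b1 h h2 by simp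
          then show ?thesis by simp
        qed
      qed
    next
      case False
      hence b2: "b \<ge> 2" using less.prems by auto
      show ?thesis
      proof (cases "odd a")
        case oa: True
        show ?thesis
        proof (cases "odd b")
          case ob: True
          obtain x where x: "a = 2*x+1" using oa by (auto elim!: oddE)
          obtain y where y: "b = 2*y+1" using ob by (auto elim!: oddE)
          have xy: "y < x" "y \<ge> 1" using x y ab b2 by auto
          have fa: "cf a = cf (x+1) + cf x + 1" using cf_unf[of a] x xy by simp
          have fb: "cf b = cf (y+1) + cf y + 1" using cf_unf[of b] y xy by simp
          have "a+b = 2*(x+y+1)" using x y by simp
          then have fn: "cf (a+b) = cf (x+y+1) + cf (x+y+1)" using cf_unf[of "a+b"]
            by simp
          have i1: "cf (x+1+y) \<le> cf (x+1) + cf y + (x+1-y)" using IH[of "x+1" y] x y xy by auto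
          have i2: "cf (x+(y+1)) \<le> cf x + cf (y+1) + (x-(y+1))" using IH[of x "y+1"] x y xy by auto
          have "cf (a+b) < cf a + cf b + (a - b)"
            using i1 i2 fa fb fn x y xy by (simp add: algebra_simps)
          then show ?thesis by simp
        next
          case eb: False
          obtain x where x: "a = 2*x+1" using oa by (auto elim!: oddE)
          obtain y where y: "b = 2*y" using eb by auto
          have xy: "y \<le> x" "y \<ge> 1" using x y ab b2 by auto
          have fa: "cf a = cf (x+1) + cf x + 1" using cf_unf[of a] x xy by simp
          have fb: "cf b = cf y + cf y" using cf_unf[of b] y xy by simp
          have fn: "cf (a+b) = cf (x+1+y) + cf (x+y) + 1" using cf_unf[of "a+b"] x y xy
            by (simp add: algebra_simps)
          have i1: "cf (x+1+y) \<le> cf (x+1) + cf y + (x+1-y) \<and> (\<not> good (x+1) y \<longrightarrow> cf (x+1+y) < cf (x+1) + cf y + (x+1-y))"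
            using IH[of "x+1" y] x y xy by auto
          have i2: "cf (x+y) \<le> cf x + cf y + (x-y)" using IH[of x y] x y xy by auto
          have g: "good (x+1) y \<Longrightarrow> good a b"
            using good_odd_even[of a b] x y ab by simp
          show ?thesis using i1 i2 fa fb fn x y xy g by auto
        qed
      next
        case ea: False
        show ?thesis
        proof (cases "odd b")
          case ob: True
          obtain x where x: "a = 2*x" using ea by auto
          obtain y where y: "b = 2*y+1" using ob by (auto elim!: oddE)
          have xy: "y < x" "y \<ge> 1" using x y ab b2 by auto
          have fa: "cf a = cf x + cf x" using cf_unf[of a] x xy by simp
          have fb: "cf b = cf (y+1) + cf y + 1" using cf_unf[of b] y xy by simp
          have fn: "cf (a+b) = cf (x+(y+1)) + cf (x+y) + 1" using cf_unf[of "a+b"] x y xy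
            by (simp add: algebra_simps)
          have i1: "cf (x+(y+1)) \<le> cf x + cf (y+1) + (x-(y+1))" using IH[of x "y+1"] x y xy by auto
          have i2: "cf (x+y) \<le> cf x + cf y + (x-y) \<and> (\<not> good x y \<longrightarrow> cf (x+y) < cf x + cf y + (x-y))"
            using IH[of x y] x y xy by auto
          have g: "good x y \<Longrightarrow> good a b"
            using good_even_odd[of a b] x y ab by simp
          show ?thesis using i1 i2 fa fb fn x y xy g by auto
        next
          case eb: False
          obtain x where x: "a = 2*x" using ea by auto
          obtain y where y: "b = 2*y" using eb by auto
          have xy: "y < x" "y \<ge> 1" using x y ab b2 by auto
          have fa: "cf a = cf x + cf x" using cf_unf[of a] x xy by simp
          have fb: "cf b = cf y + cf y" using cf_unf[of b] y xy by simp
          have fn: "cf (a+b) = cf (x+y) + cf (x+y)" using cf_unf[of "a+b"] x y xy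
            by (simp add: algebra_simps)
          have i2: "cf (x+y) \<le> cf x + cf y + (x-y) \<and> (\<not> good x y \<longrightarrow> cf (x+y) < cf x + cf y + (x-y))"
            using IH[of x y] x y xy by auto
          have g: "good x y \<Longrightarrow> good a b"
            using good_double[of x y] x y by simp
          show ?thesis using i2 fa fb fn x y xy g by auto
        qed
      qed
    qed
  qed
qed

lemma good_sym: "good a b = good b a"
  unfolding good_def by blast

lemma key2:
  assumes "1 \<le> a" "1 \<le> b"
  shows "cf (a+b) \<le> cf a + cf b + nat \<bar>int a - int b\<bar>"
    "\<not> good a b \<Longrightarrow> cf (a+b) < cf a + cf b + nat \<bar>int a - int b\<bar>"
proof -
  have "cf (a+b) \<le> cf a + cf b + nat \<bar>int a - int b\<bar> \<and>
     (\<not> good a b \<longrightarrow> cf (a+b) < cf a + cf b + nat \<bar>int a - int b\<bar>)"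
  proof (cases "b \<le> a")
    case True
    then show ?thesis using key[of b a] assms by auto
  next
    case False
    then show ?thesis using key[of a b] assms good_sym[of a b] by (auto simp: add.commute)
  qed
  then show "cf (a+b) \<le> cf a + cf b + nat \<bar>int a - int b\<bar>"
    "\<not> good a b \<Longrightarrow> cf (a+b) < cf a + cf b + nat \<bar>int a - int b\<bar>" by auto
qed

lemma leaves_pos: "leaves t \<ge> 1"
  by (induction t) auto

lemma colless_lb: "colless t \<ge> cf (leaves t)"
proof (induction t)
  case Leaf then show ?case by simp
next
  case (Node l r)
  show ?case using key2(1)[OF leaves_pos leaves_pos, of l r] Node by simp
qed

fun bal :: "nat \<Rightarrow> btree" where
  "bal n = (if n \<le> 1 then Leaf else Node (bal ((n+1) div 2)) (bal (n div 2)))"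

declare bal.simps[simp del]

lemma bal_props: "n \<ge> 1 \<Longrightarrow> leaves (bal n) = n \<and> colless (bal n) = cf n"
proof (induction n rule: less_induct)
  case (less n)
  show ?case
  proof (cases "n = 1")
    case True then show ?thesis by (simp add: bal.simps)
  next
    case False
    hence n2: "n \<ge> 2" using less.prems by auto
    have h1: "leaves (bal ((n+1) div 2)) = (n+1) div 2 \<and> colless (bal ((n+1) div 2)) = cf ((n+1) div 2)"
      using less.IH n2 by auto
    have h2: "leaves (bal (n div 2)) = n div 2 \<and> colless (bal (n div 2)) = cf (n div 2)"
      using less.IH n2 by auto
    have e: "bal n = Node (bal ((n+1) div 2)) (bal (n div 2))" using n2 by (simp add: bal.simps)
    have "(n+1) div 2 = n div 2 + n mod 2" by presburger
    then have "nat \<bar>int ((n+1) div 2) - int (n div 2)\<bar> = n mod 2" by simp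
    then show ?thesis using e h1 h2 cf_unf[OF n2] by simp
  qed
qed

inductive allgood :: "btree \<Rightarrow> bool" where
  "allgood Leaf"
| "allgood l \<Longrightarrow> allgood r \<Longrightarrow> good (leaves l) (leaves r) \<Longrightarrow> allgood (Node l r)"

lemma opt_allgood: "colless t = cf (leaves t) \<Longrightarrow> allgood t"
proof (induction t)
  case Leaf then show ?case by (simp add: allgood.intros)
next
  case (Node l r)
  have l: "colless l \<ge> cf (leaves l)" and r: "colless r \<ge> cf (leaves r)" using colless_lb by auto
  have k1: "cf (leaves l + leaves r) \<le> cf (leaves l) + cf (leaves r) + nat \<bar>int (leaves l) - int (leaves r)\<bar>"
    using key2(1)[OF leaves_pos leaves_pos] .
  have el: "colless l = cf (leaves l)" and er: "colless r = cf (leaves r)"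
    using Node.prems l r k1 by auto
  have g: "good (leaves l) (leaves r)"
    using key2(2)[OF leaves_pos leaves_pos, of l r] Node.prems el er by auto
  show ?case using Node.IH el er g by (simp add: allgood.intros)
qed

definition L :: "nat \<Rightarrow> nat \<Rightarrow> int" where
  "L j n = int n * (int j + 2) - 2^(j+1)"

lemma sackin_lb: "int (sackin t) \<ge> L j (leaves t)"
proof (induction t arbitrary: j)
  case Leaf
  have "int j + 2 \<le> 2^(j+1)"
  proof (induction j)
    case 0 then show ?case by simp
  next
    case (Suc j) then show ?case by simp
  qed
  then show ?case by (simp add: L_def)
next
  case (Node l r)
  show ?case
  proof (cases j)
    case 0
    have "L 0 (leaves l) \<le> int (sackin l)" "L 0 (leaves r) \<le> int (sackin r)" using Node.IH by auto
    then show ?thesis using 0 leaves_pos[of l] leaves_pos[of r] by (simp add: L_def)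
  next
    case (Suc i)
    have "L i (leaves l) \<le> int (sackin l)" "L i (leaves r) \<le> int (sackin r)" using Node.IH by auto
    then show ?thesis using Suc by (simp add: L_def algebra_simps)
  qed
qed

lemma L_step: "L (Suc j) n = L j n + int n - 2^(j+1)"
  by (simp add: L_def algebra_simps)

lemma L_up: "n \<le> 2^(i+1) \<Longrightarrow> L (i+k) n \<le> L i n"
proof (induction k)
  case 0 then show ?case by simp
next
  case (Suc k)
  have "(2::nat)^(i+1) \<le> 2^(i+k+1)" by (simp add: power_increasing)
  then have "int n \<le> 2^(i+k+1)" using Suc.prems by (metis of_nat_le_iff of_nat_numeral of_nat_power order.trans)
  then show ?case using Suc L_step[of "i+k" n] by simp
qed

lemma L_down: "2^(j+k) \<le> n \<Longrightarrow> L j n \<le> L (j+k) n"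
proof (induction k)
  case 0 then show ?case by simp
next
  case (Suc k)
  have "(2::nat)^(j+k) \<le> 2^(j+Suc k)" by (simp add: power_increasing)
  then have "2^(j+k) \<le> n" using Suc.prems by linarith
  then have "L j n \<le> L (j+k) n" using Suc.IH by blast
  moreover have "int n \<ge> 2^(j+k+1)" using Suc.prems
    by (metis add_Suc_right Suc_eq_plus1 of_nat_le_iff of_nat_numeral of_nat_power)
  ultimately show ?case using L_step[of "j+k" n] by simp
qed

lemma L_max: "2^i \<le> n \<Longrightarrow> n \<le> 2^(i+1) \<Longrightarrow> L j n \<le> L i n"
proof (cases "i \<le> j")
  case True
  assume "n \<le> 2^(i+1)"
  then show ?thesis using L_up[of n i "j-i"] True by simp
next
  case False
  assume "2^i \<le> n"
  then show ?thesis using L_down[of j "i-j" n] False by simp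
qed

lemma sackin_good: "allgood t \<Longrightarrow> \<exists>j. 2^j \<le> leaves t \<and> leaves t \<le> 2^(j+1) \<and> int (sackin t) = L j (leaves t)"
proof (induction t rule: allgood.induct)
  case 1 then show ?case by (intro exI[of _ 0]) (simp add: L_def)
next
  case (2 l r)
  obtain i where i: "2^i \<le> leaves l" "leaves l \<le> 2^(i+1)" "2^i \<le> leaves r" "leaves r \<le> 2^(i+1)"
    using 2(3) unfolding good_def by blast
  obtain jl where jl: "2^jl \<le> leaves l" "leaves l \<le> 2^(jl+1)" "int (sackin l) = L jl (leaves l)" using 2(4) by blast
  obtain jr where jr: "2^jr \<le> leaves r" "leaves r \<le> 2^(jr+1)" "int (sackin r) = L jr (leaves r)" using 2(5) by blast
  have sl: "int (sackin l) = L i (leaves l)"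
    using sackin_lb[of i l] jl L_max[OF i(1) i(2), of jl] by simp
  have sr: "int (sackin r) = L i (leaves r)"
    using sackin_lb[of i r] jr L_max[OF i(3) i(4), of jr] by simp
  show ?case
    by (intro exI[of _ "i+1"]) (use i sl sr in \<open>auto simp: L_def algebra_simps\<close>)
qed

lemma finite_trees: "finite {t. leaves t = n}"
proof (induction n rule: less_induct)
  case (less n)
  have sub: "{t. leaves t = n} \<subseteq> {Leaf} \<union> (\<lambda>(l, r). Node l r) ` (\<Union>a\<in>{1..<n}. {t. leaves t = a} \<times> {t. leaves t = n - a})"
  proof
    fix t assume "t \<in> {t. leaves t = n}"
    then show "t \<in> {Leaf} \<union> (\<lambda>(l, r). Node l r) ` (\<Union>a\<in>{1..<n}. {t. leaves t = a} \<times> {t. leaves t = n - a})"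
    proof (cases t)
      case Leaf then show ?thesis by simp
    next
      case (Node l r)
      have "leaves l \<ge> 1" "leaves r \<ge> 1" using leaves_pos by auto
      then show ?thesis using Node \<open>t \<in> _\<close> by (auto intro!: image_eqI[of _ _ "(l, r)"])
    qed
  qed
  have "finite (\<Union>a\<in>{1..<n}. {t. leaves t = a} \<times> {t. leaves t = n - a})"
    using less.IH by (intro finite_UN_I) auto
  then show ?case using sub finite_subset by blast
qed

lemma colmin_sub: "min_colless_trees n \<subseteq> min_sackin_trees n"
proof
  fix t assume t: "t \<in> min_colless_trees n"
  then have ln: "leaves t = n" by (simp add: min_colless_trees_def trees_with_def)
  have n1: "n \<ge> 1" using ln leaves_pos by metis
  have "bal n \<in> trees_with n" using bal_props[OF n1] by (simp add: trees_with_def)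
  then have "colless t \<le> colless (bal n)" using t by (simp add: min_colless_trees_def)
  then have "colless t = cf (leaves t)" using bal_props[OF n1] colless_lb[of t] ln by simp
  then have "allgood t" by (rule opt_allgood)
  then obtain j where j: "2^j \<le> n" "n \<le> 2^(j+1)" "int (sackin t) = L j n"
    using sackin_good ln by blast
  have "\<forall>t'\<in>trees_with n. sackin t \<le> sackin t'"
  proof
    fix t' assume "t' \<in> trees_with n"
    then have "L j n \<le> int (sackin t')" using sackin_lb[of j t'] by (simp add: trees_with_def)
    then show "sackin t \<le> sackin t'" using j by simp
  qed
  then show "t \<in> min_sackin_trees n" using ln by (simp add: min_sackin_trees_def trees_with_def)
qed

lemma quot_img: "A // r = (\<lambda>x. r `` {x}) ` A"
  unfolding quotient_def by auto

theorem corollary4: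
  fixes n :: nat
  assumes "n \<ge> 1"
  shows "c_tilde n \<le> s_tilde n"
proof -
  have fin: "finite (min_sackin_trees n)"
    using finite_trees[of n] by (rule finite_subset[rotated]) (auto simp: min_sackin_trees_def trees_with_def)
  show ?thesis unfolding c_tilde_def s_tilde_def quot_img
    using colmin_sub[of n] fin by (intro card_mono) auto
qed

end
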